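(* For $t\in\mathbb C$ let $f_t(z)=\sqrt{z^2-z+t}$ (principal branch, holomorphic near $z=0$ when $t\notin(-\infty,0]$) and let $f_t(z)=\sum_{n\ge0}\hat f_n(t)z^n$ be its Taylor expansion at $0$. Fix $0<r<1/4$ and $M>0$. Then there exists $N=N(r,M)$ such that $$\max_{1\le n\le N}|\hat f_n(t)|>M$$ for all $t\in\mathbb C$ with $|t-1/4|=r$.
   Context: $\sqrt{\cdot}$ denotes the principal branch: $\sqrt z=|z|^{1/2}e^{i(\arg z)/2}$ with $\arg z\in(-\pi,\pi]$. Note that for $|t-1/4|=r<1/4$ one has $\operatorname{Re}t>0$, so $f_t$ is holomorphic near $0$. *)

theory Defs
  imports "HOL-Analysis.Analysis"
begin

definition sqrt_quad :: "complex \<Rightarrow> complex \<Rightarrow> complex" where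
  "sqrt_quad t z = csqrt (z^2 - z + t)"

definition taylor_coeff :: "nat \<Rightarrow> complex \<Rightarrow> complex" where
  "taylor_coeff n t = (deriv ^^ n) (sqrt_quad t) 0 / of_nat (fact n)"

end

theory Submission
  imports Defs "HOL-Complex_Analysis.Complex_Analysis"
begin


definition cc :: "complex \<Rightarrow> nat \<Rightarrow> complex" where
  "cc t m = (if m=0 then t else if m=1 then -1 else if m=2 then 1 else 0)"

lemma cc_sum:
  assumes "N \<ge> 2"
  shows "(\<Sum>k\<le>N. cc t k * z^k) = z^2 - z + t"
  using assms
proof (induction N rule: dec_induct)
  case base
  then show ?case by (simp add: cc_def numeral_2_eq_2)
next
  case (step n)
  then show ?case by (simp add: cc_def)
qed

definition EE :: "(nat \<Rightarrow> complex) \<Rightarrow> nat \<Rightarrow> complex \<Rightarrow> complex" where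
  "EE a N z = (\<Sum>(i,j)\<in>({..N}\<times>{..N}) - {(i,j). i+j \<le> N}. a i * a j * z^(i+j))"

lemma poly_sq:
  assumes conv: "\<And>m. (\<Sum>i\<le>m. a i * a (m-i)) = cc t m" and N: "N \<ge> 2"
  shows "(\<Sum>n\<le>N. a n * z^n)^2 = z^2 - z + t + EE a N z"
proof -
  let ?g = "\<lambda>(i,j). a i * a j * z^(i+j)"
  have "(\<Sum>n\<le>N. a n * z^n)^2 = (\<Sum>i\<le>N. \<Sum>j\<le>N. a i * a j * z^(i+j))"
    by (simp add: power2_eq_square sum_product power_add algebra_simps)
  also have "\<dots> = sum ?g ({..N}\<times>{..N})"
    by (simp add: sum.cartesian_product)
  also have "\<dots> = sum ?g (({..N}\<times>{..N}) - {(i,j). i+j \<le> N}) + sum ?g {(i,j). i+j \<le> N}"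
    by (rule sum.subset_diff) auto
  also have "sum ?g {(i,j). i+j \<le> N} = (\<Sum>k\<le>N. \<Sum>i\<le>k. a i * a (k-i) * z^(i + (k-i)))"
    by (rule sum.triangle_reindex_eq)
  also have "\<dots> = (\<Sum>k\<le>N. cc t k * z^k)"
    by (intro sum.cong refl) (simp add: conv[symmetric] sum_distrib_right)
  also have "\<dots> = z^2 - z + t" using cc_sum N by simp
  finally show ?thesis by (simp add: EE_def)
qed

lemma EE_bound:
  assumes bnd: "\<And>n. n \<le> N \<Longrightarrow> cmod (a n) \<le> M1" and "0 \<le> M1"
    and z: "cmod z \<le> R" and R: "0 \<le> R" "R \<le> 1"
  shows "cmod (EE a N z) \<le> (real N + 1)^2 * M1^2 * R^(N+1)"
proof -
  let ?B = "({..N}\<times>{..N}) - {(i,j). i+j \<le> N}"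
  have "cmod (EE a N z) \<le> (\<Sum>(i,j)\<in>?B. cmod (a i * a j * z^(i+j)))"
    unfolding EE_def by (rule norm_sum[THEN order_trans]) (simp add: case_prod_unfold)
  also have "\<dots> \<le> (\<Sum>(i,j)\<in>?B. M1^2 * R^(N+1))"
  proof (rule sum_mono)
    fix p assume p: "p \<in> ?B"
    obtain i j where ij: "p = (i,j)" by force
    with p have i: "i \<le> N" "j \<le> N" "N + 1 \<le> i + j" by auto
    have "cmod (a i * a j * z^(i+j)) = cmod (a i) * cmod (a j) * cmod z ^ (i+j)"
      by (simp add: norm_mult norm_power)
    also have "\<dots> \<le> M1 * M1 * R^(i+j)"
      by (intro mult_mono bnd i power_mono z) (auto intro: order_trans[OF norm_ge_zero z] \<open>0 \<le> M1\<close>)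
    also have "R^(i+j) \<le> R^(N+1)"
      by (rule power_decreasing) (use i R in auto)
    hence "M1 * M1 * R^(i+j) \<le> M1 * M1 * R^(N+1)"
      using \<open>0 \<le> M1\<close> by (simp add: mult_left_mono)
    finally show "(case p of (i,j) \<Rightarrow> cmod (a i * a j * z^(i+j))) \<le> (case p of (i,j) \<Rightarrow> M1^2 * R^(N+1))"
      by (simp add: ij power2_eq_square)
  qed
  also have "\<dots> = real (card ?B) * (M1^2 * R^(N+1))" by (simp add: case_prod_unfold)
  also have "\<dots> \<le> (real N + 1)^2 * (M1^2 * R^(N+1))"
  proof (rule mult_right_mono)
    have "card ?B \<le> card ({..N}\<times>{..N})" by (rule card_mono) auto
    also have "\<dots> = (N+1)^2" by (simp add: card_cartesian_product power2_eq_square)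
    finally show "real (card ?B) \<le> (real N + 1)^2"
      by (metis of_nat_1 of_nat_add of_nat_le_iff of_nat_power)
  qed (use R \<open>0 \<le> M1\<close> in auto)
  finally show ?thesis by (simp add: mult.assoc)
qed

lemma pow_lip:
  fixes z w :: complex
  assumes "cmod z \<le> R" "cmod w \<le> R"
  shows "cmod (z^n - w^n) \<le> real n * R^(n-1) * cmod (z - w)"
proof (induction n)
  case 0 then show ?case by simp
next
  case (Suc n)
  have R0: "0 \<le> R" using assms(1) norm_ge_zero order_trans by blast
  have "z^Suc n - w^Suc n = z * (z^n - w^n) + (z - w) * w^n" by (simp add: algebra_simps)
  hence "cmod (z^Suc n - w^Suc n) \<le> cmod z * cmod (z^n - w^n) + cmod (z-w) * cmod w ^ n"
    by (metis norm_mult norm_power norm_triangle_ineq)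
  also have "\<dots> \<le> R * (real n * R^(n-1) * cmod (z - w)) + cmod (z-w) * R^n"
    by (intro add_mono mult_mono Suc power_mono assms) (auto simp: R0)
  also have "\<dots> = real (Suc n) * R^n * cmod (z - w)"
    by (cases n) (auto simp: algebra_simps)
  finally show ?case by simp
qed

lemma summ_K:
  fixes R :: real assumes "0 \<le> R" "R < 1"
  shows "summable (\<lambda>n. real (Suc n) * R^n)"
proof -
  have "summable (\<lambda>n. diffs (\<lambda>_. 1::real) n * R ^ n)"
    by (rule termdiff_converges[where K=1]) (use assms in \<open>auto intro: summable_geometric\<close>)
  thus ?thesis by (simp add: diffs_def)
qed

lemma lip_sum:
  fixes R :: real assumes "0 \<le> R" "R < 1"
  shows "(\<Sum>n\<le>N. real n * R^(n-1)) \<le> suminf (\<lambda>n. real (Suc n) * R^n)"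
proof -
  have "(\<Sum>n\<le>N. real n * R^(n-1)) = (\<Sum>n<N. real (Suc n) * R^n)"
    by (simp add: sum.atMost_shift)
  also have "\<dots> \<le> suminf (\<lambda>n. real (Suc n) * R^n)"
    by (rule sum_le_suminf) (use summ_K[OF assms] assms in auto)
  finally show ?thesis .
qed

lemma P_lip:
  fixes z w :: complex
  assumes bnd: "\<And>n. n \<le> N \<Longrightarrow> cmod (a n) \<le> M1" and "0 \<le> M1"
    and "cmod z \<le> R" "cmod w \<le> R" "0 \<le> R" "R < 1"
  shows "cmod ((\<Sum>n\<le>N. a n * z^n) - (\<Sum>n\<le>N. a n * w^n)) \<le> M1 * suminf (\<lambda>n. real (Suc n) * R^n) * cmod (z - w)"
proof -
  have "cmod ((\<Sum>n\<le>N. a n * z^n) - (\<Sum>n\<le>N. a n * w^n)) = cmod (\<Sum>n\<le>N. a n * (z^n - w^n))"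
    by (simp add: sum_subtractf algebra_simps)
  also have "\<dots> \<le> (\<Sum>n\<le>N. cmod (a n) * cmod (z^n - w^n))"
    by (rule norm_sum[THEN order_trans]) (simp add: norm_mult)
  also have "\<dots> \<le> (\<Sum>n\<le>N. M1 * (real n * R^(n-1) * cmod (z - w)))"
    by (intro sum_mono mult_mono bnd pow_lip assms) auto
  also have "\<dots> = M1 * cmod (z-w) * (\<Sum>n\<le>N. real n * R^(n-1))"
    by (simp add: sum_distrib_left algebra_simps)
  also have "\<dots> \<le> M1 * cmod (z-w) * suminf (\<lambda>n. real (Suc n) * R^n)"
    by (intro mult_left_mono lip_sum assms) (use assms in auto)
  finally show ?thesis by (simp add: algebra_simps)
qed



lemma deriv_q: "deriv (\<lambda>w::complex. w^2 - w + t) = (\<lambda>w. 2*w - 1)"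
  by (rule ext, rule DERIV_imp_deriv) (auto intro!: derivative_eq_intros)
lemma deriv_l: "deriv (\<lambda>w::complex. 2*w - 1) = (\<lambda>w. 2)"
  by (rule ext, rule DERIV_imp_deriv) (auto intro!: derivative_eq_intros)
lemma deriv_c: "deriv (\<lambda>w::complex. c) = (\<lambda>w. 0)"
  by (rule ext, rule DERIV_imp_deriv) (auto intro!: derivative_eq_intros)
lemma deriv_0: "(deriv ^^ k) (\<lambda>w::complex. 0) = (\<lambda>w. 0)"
  by (induction k) (auto simp: deriv_c)

lemma higher_q: "(deriv ^^ m) (\<lambda>w::complex. w^2 - w + t) 0 = fact m * cc t m"
proof -
  consider "m = 0" | "m = 1" | "m = 2" | k where "m = k + 3" proof -
    have "m = 0 \<or> m = 1 \<or> m = 2 \<or> (\<exists>k. m = k + 3)" by presburger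
    thus ?thesis using that by blast
  qed
  then show ?thesis
  proof cases
    case 4
    have "(deriv ^^ m) (\<lambda>w::complex. w^2 - w + t) = (deriv ^^ k) ((deriv ^^ 3) (\<lambda>w::complex. w^2 - w + t))"
      by (simp add: 4 funpow_add)
    also have "(deriv ^^ 3) (\<lambda>w::complex. w^2 - w + t) = (\<lambda>w. 0)"
      by (simp add: numeral_3_eq_3 deriv_q deriv_l deriv_c)
    finally show ?thesis by (simp add: deriv_0 cc_def 4)
  next
    case 3
    have "(deriv ^^ m) (\<lambda>w::complex. w^2 - w + t) = deriv (deriv (\<lambda>w::complex. w^2 - w + t))"
      by (simp add: 3 numeral_2_eq_2)
    thus ?thesis by (simp add: deriv_q deriv_l cc_def 3)
  next
    case 2
    thus ?thesis by (simp add: deriv_q cc_def)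
  qed (auto simp: cc_def)
qed

lemma taylor_conv:
  assumes "Re t > 0"
  shows "(\<Sum>i\<le>m. taylor_coeff i t * taylor_coeff (m-i) t) = cc t m"
proof -
  define \<rho> where "\<rho> = min 1 (Re t / 2)"
  have \<rho>: "\<rho> > 0" using assms by (simp add: \<rho>_def)
  have nn: "z^2 - z + t \<notin> \<real>\<^sub>\<le>\<^sub>0" if "z \<in> ball 0 \<rho>" for z
  proof -
    have z: "cmod z < \<rho>" using that by simp
    have "cmod (z^2 - z) \<le> cmod z ^ 2 + cmod z" by (metis norm_power norm_triangle_ineq4)
    also have "cmod z ^ 2 \<le> cmod z" using z by (auto simp: \<rho>_def power2_eq_square intro!: mult_left_le_one_le)
    finally have "cmod (z^2 - z) < Re t" using z by (simp add: \<rho>_def)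
    moreover have "Re (z^2 - z) \<ge> - cmod (z^2 - z)" by (metis abs_Re_le_cmod abs_le_iff minus_le_iff)
    ultimately have "Re (z^2 - z + t) > 0" by simp
    thus ?thesis by (simp add: complex_nonpos_Reals_iff)
  qed
  have hol: "sqrt_quad t holomorphic_on ball 0 \<rho>"
    unfolding sqrt_quad_def[abs_def]
    by (rule holomorphic_on_csqrt') (auto intro!: holomorphic_intros nn)
  have sq: "(\<lambda>w. sqrt_quad t w * sqrt_quad t w) = (\<lambda>w. w^2 - w + t)"
    by (rule ext) (metis power2_csqrt power2_eq_square sqrt_quad_def)
  have "fact m * cc t m = (deriv ^^ m) (\<lambda>w. sqrt_quad t w * sqrt_quad t w) 0"
    by (simp add: sq higher_q)
  also have "\<dots> = (\<Sum>i = 0..m. of_nat (m choose i) * (deriv ^^ i) (sqrt_quad t) 0 * (deriv ^^ (m-i)) (sqrt_quad t) 0)"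
    by (rule higher_deriv_mult[OF hol hol]) (use \<rho> in auto)
  also have "\<dots> = (\<Sum>i\<le>m. fact m * (taylor_coeff i t * taylor_coeff (m-i) t))"
    by (intro sum.cong) (auto simp: atLeast0AtMost taylor_coeff_def binomial_fact)
  also have "\<dots> = fact m * (\<Sum>i\<le>m. taylor_coeff i t * taylor_coeff (m-i) t)"
    by (simp add: sum_distrib_left)
  finally show ?thesis by simp
qed

lemma tc0: "taylor_coeff 0 t = csqrt t"
  by (simp add: taylor_coeff_def sqrt_quad_def)



theorem lemma5p7:
  fixes r M :: real
  assumes "0 < r" and "r < 1/4" and "M > 0"
  shows "\<exists>N::nat. \<forall>t::complex. cmod (t - 1/4) = r \<longrightarrow>
           (\<exists>n. 1 \<le> n \<and> n \<le> N \<and> cmod (taylor_coeff n t) > M)"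
proof -
  define rt where "rt = sqrt r"
  have h4: "sqrt (1/4::real) = 1/2"
    by (metis real_sqrt_divide real_sqrt_four real_sqrt_one)
  have "sqrt r < sqrt (1/4)" using assms by (simp only: real_sqrt_less_iff)
  hence rt: "0 < rt" "rt < 1/2" "rt^2 = r"
    using assms h4 by (auto simp: rt_def) 
  define R where "R = 1/2 + rt"
  define R' where "R' = (1 + R)/2"
  have R: "0 \<le> R" "R < 1" "R \<le> R'" "R' < 1" "0 \<le> R'" using rt by (auto simp: R_def R'_def)
  define M1 where "M1 = max M 1"
  have M1: "M \<le> M1" "1 \<le> M1" "0 \<le> M1" by (auto simp: M1_def)
  define K where "K = suminf (\<lambda>n. real (Suc n) * R'^n)"
  have K: "0 \<le> K" unfolding K_def
    by (rule suminf_nonneg) (use summ_K[OF R(5,4)] R in auto)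
  define L where "L = M1 * K"
  have L: "0 \<le> L" using K M1 by (simp add: L_def)
  define \<eta> where "\<eta> = min ((1-R)/2) (rt/(2*L^2+1))"
  have pos: "0 < 2*L^2+1" by (simp add: add_pos_nonneg add_nonneg_pos)
  have "0 < (1-R)/2" "0 < rt/(2*L^2+1)" using R rt pos by auto
  hence e1: "0 < \<eta>" by (simp add: \<eta>_def)
  have e2: "\<eta> \<le> (1-R)/2" "\<eta> \<le> rt/(2*L^2+1)" unfolding \<eta>_def by (rule min.cobounded1, rule min.cobounded2)
  have e3: "\<eta> * (2*L^2+1) \<le> rt" using e2(2) pos by (simp add: pos_le_divide_eq)
  have \<eta>: "0 < \<eta>" "\<eta> \<le> (1-R)/2" "(2*L^2+1) * \<eta> \<le> rt"
    using e1 e2 e3 by (simp_all add: mult.commute)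
  define \<epsilon> where "\<epsilon> = rt * \<eta> / 3"
  have \<epsilon>: "0 < \<epsilon>" using rt \<eta> by (simp add: \<epsilon>_def)
  define y where "y = sqrt R'"
  have y: "0 \<le> y" "y < 1" "y^2 = R'" using R by (auto simp: y_def)
  have "(\<lambda>n. of_nat n * y ^ n) \<longlonglongrightarrow> 0"
    by (rule powser_times_n_limit_0) (use y in simp)
  hence "(\<lambda>n. of_nat (Suc n) * y ^ (Suc n)) \<longlonglongrightarrow> 0"
    by (rule LIMSEQ_Suc)
  hence "(\<lambda>n. (of_nat (Suc n) * y ^ (Suc n))^2 * M1^2) \<longlonglongrightarrow> 0^2 * M1^2"
    by (intro tendsto_intros)
  hence "eventually (\<lambda>n. (of_nat (Suc n) * y ^ (Suc n))^2 * M1^2 < \<epsilon>) sequentially"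
    using \<epsilon> by (intro order_tendstoD(2)) auto
  then obtain N0 where N0: "\<And>n. n \<ge> N0 \<Longrightarrow> (of_nat (Suc n) * y ^ (Suc n))^2 * M1^2 < \<epsilon>"
    by (auto simp: eventually_sequentially)
  define N where "N = N0 + 2"
  have N2: "N \<ge> 2" by (simp add: N_def)
  have epsN: "(real N + 1)^2 * M1^2 * R'^(N+1) < \<epsilon>"
  proof -
    have "(real N + 1)^2 * M1^2 * R'^(N+1) = (of_nat (Suc N) * y ^ (Suc N))^2 * M1^2"
      by (simp add: y(3)[symmetric] power_mult_distrib power_mult[symmetric] mult.commute)
    also have "\<dots> < \<epsilon>" by (rule N0) (simp add: N_def)
    finally show ?thesis .
  qed
  show ?thesis
  proof (rule exI[of _ N], intro allI impI)
    fix t :: complex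
    assume t: "cmod (t - 1/4) = r"
    show "\<exists>n. 1 \<le> n \<and> n \<le> N \<and> cmod (taylor_coeff n t) > M"
    proof (rule ccontr)
      assume H: "\<not> ?thesis"
      define a where "a = (\<lambda>n. taylor_coeff n t)"
      have Ret: "Re t > 0"
      proof -
        have "Re (t - 1/4) \<ge> - r" using t by (metis abs_Re_le_cmod abs_le_iff minus_le_iff)
        thus ?thesis using assms by simp
      qed
      have conv: "\<And>m. (\<Sum>i\<le>m. a i * a (m-i)) = cc t m"
        unfolding a_def by (rule taylor_conv[OF Ret])
      have cmt: "cmod t \<le> 1"
      proof -
        have "cmod t \<le> cmod (1/4::complex) + cmod (t - 1/4)" by (rule norm_triangle_sub)
        thus ?thesis using t assms by simp
      qed
      have bnd: "\<And>n. n \<le> N \<Longrightarrow> cmod (a n) \<le> M1"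
      proof -
        fix n assume n: "n \<le> N"
        show "cmod (a n) \<le> M1"
        proof (cases "n = 0")
          case True
          have "sqrt (cmod t) \<le> 1" using cmt by simp
          moreover have "cmod (a n) = sqrt (cmod t)" by (simp add: True a_def tc0)
          ultimately show ?thesis using M1 by linarith
        next
          case False
          thus ?thesis using H n M1 by (auto simp: a_def not_less intro: order_trans)
        qed
      qed
      define sq where "sq = csqrt (1 - 4*t)"
      define \<zeta> where "\<zeta> = (1 + sq)/2"
      have sq2: "sq^2 = 1 - 4*t" by (simp add: sq_def)
      have root: "\<zeta>^2 - \<zeta> + t = 0"
        unfolding \<zeta>_def by (simp add: power2_eq_square field_simps sq2[unfolded power2_eq_square])
      have c14: "cmod (1 - 4*t) = 4*r"
      proof -
        have "cmod (1 - 4*t) = cmod ((-4) * (t - 1/4))" by (rule arg_cong[where f=cmod]) simp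
        also have "\<dots> = cmod (-4::complex) * cmod (t - 1/4)" by (rule norm_mult)
        also have "cmod (-4::complex) = 4" by simp
        finally show ?thesis using t by simp
      qed
      have csq: "cmod sq = 2*rt"
        using c14 rt by (simp add: sq_def real_sqrt_mult rt_def)
      have "2*\<zeta> - 1 = sq" unfolding \<zeta>_def by (simp add: field_simps)
      hence d: "cmod (2*\<zeta> - 1) = 2*rt" using csq by simp
      have z1: "cmod \<zeta> \<le> R"
      proof -
        have "cmod (1 + sq) \<le> cmod (1::complex) + cmod sq" by (rule norm_triangle_ineq)
        hence "cmod \<zeta> \<le> (1 + cmod sq) / 2" unfolding \<zeta>_def by simp
        thus ?thesis using csq by (simp add: R_def)
      qed
      define z where "z = \<zeta> + of_real \<eta>"
      have z2: "cmod z \<le> R'"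
      proof -
        have "cmod z \<le> cmod \<zeta> + \<eta>" unfolding z_def using \<eta>
          by (metis abs_of_pos norm_of_real norm_triangle_ineq)
        thus ?thesis using z1 \<eta> by (simp add: R'_def)
      qed
      define P where "P = (\<lambda>w. \<Sum>n\<le>N. a n * w^n)"
      have E1: "cmod (EE a N \<zeta>) < \<epsilon>"
        using EE_bound[of N a M1, OF bnd M1(3) order_trans[OF z1 R(3)] R(5) less_imp_le[OF R(4)]] epsN by linarith
      have E2: "cmod (EE a N z) < \<epsilon>"
        using EE_bound[of N a M1, OF bnd M1(3) z2 R(5) less_imp_le[OF R(4)]] epsN by linarith
      have P1: "P \<zeta> ^2 = EE a N \<zeta>"
        using poly_sq[OF conv N2, of \<zeta>] root by (simp add: P_def)
      have qz: "z^2 - z + t = (2*\<zeta> - 1) * of_real \<eta> + (of_real \<eta>)^2"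
        using root unfolding z_def by (simp add: power2_eq_square algebra_simps)
      have P2: "P z ^2 = (2*\<zeta> - 1) * of_real \<eta> + (of_real \<eta>)^2 + EE a N z"
        using poly_sq[OF conv N2, of z] qz by (simp add: P_def)
      have lip: "cmod (P z - P \<zeta>) \<le> L * \<eta>"
      proof -
        have "cmod (P z - P \<zeta>) \<le> M1 * K * cmod (z - \<zeta>)"
          unfolding P_def K_def
          by (rule P_lip[of N a M1, OF bnd M1(3) z2 order_trans[OF z1 R(3)] R(5) R(4)])
        thus ?thesis using \<eta> by (simp add: z_def L_def)
      qed
      define p where "p = cmod (P \<zeta>)"
      define u where "u = cmod (P z)"
      have p: "p^2 < \<epsilon>" "0 \<le> p" using E1 P1 by (auto simp: p_def norm_power[symmetric])
      have u1: "u \<le> p + L * \<eta>" "0 \<le> u"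
        using lip norm_triangle_ineq2[of "P z" "P \<zeta>"] by (auto simp: u_def p_def)
      have u2: "u^2 > 2*rt*\<eta> - \<eta>^2 - \<epsilon>"
      proof -
        have "u^2 = cmod ((2*\<zeta> - 1) * of_real \<eta> + (of_real \<eta>)^2 + EE a N z)"
          by (simp add: u_def norm_power[symmetric] P2)
        moreover have "cmod ((2*\<zeta> - 1) * of_real \<eta> + (of_real \<eta>)^2 + EE a N z)
            \<ge> cmod ((2*\<zeta> - 1) * of_real \<eta>) - cmod ((of_real \<eta>)^2 + EE a N z)"
          by (metis add.assoc norm_diff_ineq norm_minus_commute diff_minus_eq_add)
        moreover have "cmod ((of_real \<eta>)^2 + EE a N z) \<le> \<eta>^2 + cmod (EE a N z)"
          by (metis norm_of_real norm_power norm_triangle_ineq power2_abs)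
        moreover have "cmod ((2*\<zeta> - 1) * of_real \<eta>) = 2*rt*\<eta>"
          using d \<eta> by (simp add: norm_mult)
        ultimately show ?thesis using E2 by linarith
      qed
      have "u^2 \<le> (p + L*\<eta>)^2" using u1 by (intro power_mono) auto
      also have "\<dots> \<le> 2*p^2 + 2*(L*\<eta>)^2"
        using zero_le_power2[of "p - L*\<eta>"] unfolding power2_diff power2_sum by linarith
      finally have "2*rt*\<eta> < 3*\<epsilon> + (2*L^2+1)*\<eta>*\<eta>"
        using u2 p by (simp add: power2_eq_square algebra_simps)
      moreover have "(2*L^2+1)*\<eta>*\<eta> \<le> rt*\<eta>" using \<eta> by (intro mult_right_mono) auto
      moreover have "rt * \<eta> = \<eta> * rt" by (rule mult.commute)
      ultimately show False using \<epsilon>_def by simp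
    qed
  qed
qed

end
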